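(* Let $r>0$ and let two points be chosen independently and uniformly at random in the equilateral triangle $\mathcal P_{3,r}$ (circumradius $r$, side length $\sqrt3\,r$). The density of their distance $t$ is $g(t)=0$ for $t\notin[0,\sqrt3\,r)$ and $$g(t)=\frac{2t}{A}\Big[\pi+\frac uA\big(\phi(t)-t\big)\Big]\quad(0\le t<\sqrt3\,r),\qquad u=3\sqrt3\,r,\ A=\tfrac34\sqrt3\,r^2,$$ where $$\phi(t)=\frac{(3\sqrt3+2\pi)t^2}{36r}\quad\text{for }0\le t<\tfrac{3r}{2},$$ $$\phi(t)=\frac32\Big[t\sqrt{1-\Big(\frac{3r}{2t}\Big)^2}-\frac{\pi r}{2}\Big]+\Big(\frac{1}{4\sqrt3}-\frac{\pi}{9}\Big)\frac{t^2}{r}+\Big(\frac{3r}{2}+\frac{t^2}{3r}\Big)\arcsin\frac{3r}{2t}\quad\text{for }\tfrac{3r}{2}\le t<\sqrt3\,r.$$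
   Context: $\mathcal P_{3,r}$ denotes the equilateral triangle whose circumscribed circle has radius $r>0$; $u$ and $A$ are its perimeter and area. *)

theory Defs
  imports "HOL-Probability.Probability"
begin

definition tri3 :: "real \<Rightarrow> (real \<times> real) set" where
  "tri3 r = convex hull {(r, 0), (-r/2, sqrt 3 * r / 2), (-r/2, - sqrt 3 * r / 2)}"

definition tri3_perimeter :: "real \<Rightarrow> real" where
  "tri3_perimeter r = 3 * sqrt 3 * r"

definition tri3_area :: "real \<Rightarrow> real" where
  "tri3_area r = 3/4 * sqrt 3 * r^2"

definition tri3_phi :: "real \<Rightarrow> real \<Rightarrow> real" where
  "tri3_phi r t =
     (if t < 3*r/2 then (3 * sqrt 3 + 2*pi) * t^2 / (36 * r)
      else 3/2 * (t * sqrt (1 - (3*r/(2*t))^2) - pi*r/2)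
           + (1/(4 * sqrt 3) - pi/9) * t^2 / r
           + (3*r/2 + t^2/(3*r)) * arcsin (3*r/(2*t)))"

definition tri3_density :: "real \<Rightarrow> real \<Rightarrow> real" where
  "tri3_density r t =
     (if 0 \<le> t \<and> t < sqrt 3 * r then
        2*t / tri3_area r * (pi + tri3_perimeter r / tri3_area r * (tri3_phi r t - t))
      else 0)"

definition tri3_pair_space :: "real \<Rightarrow> ((real \<times> real) \<times> (real \<times> real)) measure" where
  "tri3_pair_space r =
     pair_measure (uniform_measure lborel (tri3 r)) (uniform_measure lborel (tri3 r))"

end

theory Submission
  imports Defs
begin

no_notation vector_scalar_mult (infixl \<open>*s\<close> 70)


definition Wf :: "real \<Rightarrow> real \<Rightarrow> real \<Rightarrow> real" where
 "Wf c t a = c^2*(a * sqrt(t^2-a^2) + t^2*arcsin(a/t))/2 + 2*c * sqrt(t^2-a^2)^3/3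
     + t^4*arcsin(a/t)/8 - a * sqrt(t^2-a^2)*(t^2-2*a^2)/8"

lemma sqrt_deriv:
  fixes t a :: real assumes "a^2 < t^2"
  shows "((\<lambda>a. sqrt(t^2-a^2)) has_real_derivative (-a/sqrt(t^2-a^2))) (at a)"
  using assms
  by (auto intro!: derivative_eq_intros simp: field_simps)

lemma arcsin_deriv:
  fixes t a :: real assumes "0<t" "-t<a" "a<t"
  shows "((\<lambda>a. arcsin(a/t)) has_real_derivative (1/sqrt(t^2-a^2))) (at a)"
proof -
  have at1: "-1 < a/t" "a/t < 1" using assms by (auto simp: field_simps)
  have e: "sqrt(1-(a/t)^2) = sqrt(t^2-a^2)/t"
  proof -
    have "1-(a/t)^2 = (t^2-a^2)/t^2" using assms by (simp add: field_simps power2_eq_square)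
    thus ?thesis using assms by (simp add: real_sqrt_divide)
  qed
  show ?thesis
  proof -
    have "((\<lambda>a. arcsin(a/t)) has_real_derivative inverse(sqrt(1-(a/t)^2)) * (1/t)) (at a)"
      by (rule DERIV_chain2[OF DERIV_arcsin]) (use at1 assms in \<open>auto intro!: derivative_eq_intros\<close>)
    moreover have "inverse(sqrt(1-(a/t)^2)) * (1/t) = 1/sqrt(t^2-a^2)" using e assms by (simp add: field_simps)
    ultimately show ?thesis by simp
  qed
qed

lemma W_deriv:
  fixes c t a :: real assumes "0<t" "-t<a" "a<t"
  shows "((\<lambda>a. Wf c t a) has_real_derivative (c-a)^2 * sqrt(t^2-a^2)) (at a)"
proof -
  have "\<bar>a\<bar>^2 < t^2" by (rule power_strict_mono) (use assms in auto)
  hence lt: "a^2 < t^2" by simp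
  define S where "S = (\<lambda>a. sqrt(t^2-a^2))"
  define AS where "AS = (\<lambda>a::real. arcsin(a/t))"
  have Sx: "\<And>x. sqrt(t^2-x^2) = S x" "\<And>x. arcsin(x/t) = AS x" by (simp_all add: S_def AS_def)
  have d1: "(S has_real_derivative (-a/S a)) (at a)" unfolding S_def using sqrt_deriv[OF lt] .
  have d2: "(AS has_real_derivative (1/S a)) (at a)" unfolding AS_def S_def using arcsin_deriv[OF assms] .
  have s: "S a > 0" "(S a)^2 = t^2-a^2" using lt by (simp_all add: S_def)
  have "((\<lambda>a. c^2*(a * S a + t^2*AS a)/2 + 2*c * S a^3/3
     + t^4*AS a/8 - a * S a*(t^2-2*a^2)/8) has_real_derivative (c-a)^2 * S a) (at a)"
    apply (rule derivative_eq_intros d1 d2 refl | (simp; fail))+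
    using s apply (simp add: field_simps power2_eq_square power3_eq_cube)
    by algebra
  thus ?thesis unfolding Wf_def Sx .
qed


definition Qf :: "real \<Rightarrow> real \<Rightarrow> real" where
  "Qf c a = c^2*a^2/2 - 2*c*a^3/3 + a^4/4"

lemma W_int:
  assumes "0<t" "-t \<le> a0" "a0 \<le> b" "b \<le> t"
  shows "((\<lambda>a. (c-a)^2 * sqrt(t^2-a^2)) has_integral (Wf c t b - Wf c t a0)) {a0..b}"
proof (rule fundamental_theorem_of_calculus_interior)
  show "continuous_on {a0..b} (Wf c t)"
    unfolding Wf_def using assms
    by (intro continuous_intros) (auto simp: field_simps)
  fix x assume "x \<in> {a0<..<b}"
  then show "(Wf c t has_vector_derivative (c-x)^2 * sqrt(t^2-x^2)) (at x)"
    using assms W_deriv[of t x c] by (simp add: has_real_derivative_iff_has_vector_derivative)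
qed (use assms in auto)

lemma Q_int:
  assumes "0 \<le> b"
  shows "((\<lambda>a. (c-a)^2 * (a/sqrt 3)) has_integral (Qf c b - Qf c 0)/sqrt 3) {0..b}"
proof -
  have "((\<lambda>a. (c-a)^2 * (a/sqrt 3)) has_integral (Qf c b/sqrt 3 - Qf c 0/sqrt 3)) {0..b}"
  proof (rule fundamental_theorem_of_calculus[where f="\<lambda>a. Qf c a / sqrt 3"])
    fix x::real assume "x \<in> {0..b}"
    have "((\<lambda>a. Qf c a / sqrt 3) has_real_derivative (c-x)^2 * (x/sqrt 3)) (at x within {0..b})"
      unfolding Qf_def
      apply (rule derivative_eq_intros refl | (simp; fail))+
      by (simp add: field_simps power2_eq_square power3_eq_cube)
    thus "((\<lambda>a. Qf c a / sqrt 3) has_vector_derivative (c-x)^2 * (x/sqrt 3)) (at x within {0..b})"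
      by (simp add: has_real_derivative_iff_has_vector_derivative)
  qed (use assms in auto)
  thus ?thesis by (simp add: diff_divide_distrib)
qed

lemma arcsin_sqrt3_2: "arcsin (sqrt 3/2) = pi/3"
  using arcsin_sin[of "pi/3"] sin_60 by simp

lemma W_t: "0<t \<Longrightarrow> Wf c t t = pi*c^2*t^2/4 + pi*t^4/16"
  unfolding Wf_def by (simp add: field_simps)

lemma W_kt: assumes "0<t"
  shows "Wf c t (sqrt 3/2*t) = c^2*t^2*(sqrt 3/8 + pi/6) + c*t^3/12 + pi*t^4/24 + sqrt 3*t^4/64"
proof -
  have s3: "sqrt 3 * sqrt 3 = 3" by simp
  have "t^2 - (sqrt 3/2*t)^2 = (t/2)^2" by (simp add: power2_eq_square field_simps)
  hence e1: "sqrt(t^2 - (sqrt 3/2*t)^2) = t/2" using assms by simp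
  have e2: "arcsin (sqrt 3/2*t/t) = pi/3" using assms arcsin_sqrt3_2 by simp
  show ?thesis unfolding Wf_def e1 e2
    by (simp add: field_simps power2_eq_square power3_eq_cube) (simp add: power4_eq_xxxx s3 algebra_simps)
qed

lemma W_c: assumes "0<c" "c\<le>t"
  shows "Wf c t c = (c^2*t^2/2 + t^4/8) * arcsin(c/t) + c* sqrt(t^2-c^2)*(c^2/12 + 13*t^2/24)"
proof -
  have h3: "sqrt(t^2-c^2)^3 = sqrt(t^2-c^2) * (t^2-c^2)"
    using assms by (simp add: power3_eq_cube power2_eq_square mult_mono)
  show ?thesis unfolding Wf_def by (simp add: field_simps) (use h3 in algebra)
qed

lemma Q_kt: "Qf c (sqrt 3/2*t)/sqrt 3 = sqrt 3*c^2*t^2/8 - c*t^3/4 + 3* sqrt 3*t^4/64"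
proof -
  have s3: "sqrt 3 * sqrt 3 = 3" by simp
  show ?thesis unfolding Qf_def
    by (simp add: field_simps power2_eq_square power3_eq_cube power4_eq_xxxx) (simp add: mult.assoc[symmetric])
qed


definition psi :: "real \<Rightarrow> real \<Rightarrow> real \<Rightarrow> real" where
  "psi c t a = (c-a)^2 * min (a/sqrt 3) (sqrt(t^2-a^2))"

definition Jc :: "real \<Rightarrow> real \<Rightarrow> real" where
  "Jc c t = (if t \<le> c then pi*c^2*t^2/12 - c*t^3/3 + (sqrt 3/32+pi/48)*t^4
   else if t < 2*c/sqrt 3 then -pi*c^2*t^2/6 - c*t^3/3 + (sqrt 3/32 - pi/24)*t^4
        + (c^2*t^2/2 + t^4/8)*arcsin(c/t) + c * sqrt(t^2-c^2)*(c^2/12+13*t^2/24)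
   else c^4/(12*sqrt 3))"

lemma psi_lo: assumes "0\<le>a" "a \<le> sqrt 3/2*t" shows "psi c t a = (c-a)^2*(a/sqrt 3)"
proof -
  have "a^2 \<le> (sqrt 3/2*t)^2" using assms by (intro power_mono) auto
  hence "(a/sqrt 3)^2 \<le> t^2-a^2" by (simp add: power_divide field_simps power_mult_distrib)
  hence "a/sqrt 3 \<le> sqrt(t^2-a^2)" by (rule real_le_rsqrt)
  thus ?thesis unfolding psi_def by simp
qed

lemma psi_hi: assumes "0<t" "sqrt 3/2*t \<le> a" shows "psi c t a = (c-a)^2 * sqrt(t^2-a^2)"
proof -
  have "0 \<le> sqrt 3/2*t" using assms by simp
  hence "0 \<le> a" using assms by linarith
  have "0 \<le> sqrt 3/2*t" using assms by simp
  hence "(sqrt 3/2*t)^2 \<le> a^2" using assms by (intro power_mono) auto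
  hence "t^2-a^2 \<le> (a/sqrt 3)^2" by (simp add: power_divide field_simps power_mult_distrib)
  hence "sqrt(t^2-a^2) \<le> sqrt((a/sqrt 3)^2)" by (rule real_sqrt_le_mono)
  also have "\<dots> = a/sqrt 3" using \<open>0 \<le> a\<close> by (simp add: abs_of_nonneg)
  finally show ?thesis unfolding psi_def by simp
qed

lemma J_int: assumes c: "0<c" and t: "0<t"
  shows "(psi c t has_integral Jc c t) {0..min c t}"
proof -
  define k where "k = sqrt 3/2*t"
  have k0: "0 \<le> k" "k \<le> t" using t by (auto simp: k_def) (smt (verit) real_sqrt_le_iff real_sqrt_four)
  have s3: "sqrt 3 * sqrt 3 = 3" by simp
  have Q0: "Qf c 0 = 0" by (simp add: Qf_def)
  have P1: "(psi c t has_integral Qf c k / sqrt 3) {0..k}"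
  proof -
    have "((\<lambda>a. (c-a)^2*(a/sqrt 3)) has_integral Qf c k / sqrt 3) {0..k}"
      using Q_int[OF k0(1), of c] by (simp add: Q0)
    then show ?thesis by (rule has_integral_eq[rotated]) (simp add: psi_lo k_def)
  qed
  have P2: "-t \<le> k \<Longrightarrow> k \<le> b \<Longrightarrow> b \<le> t \<Longrightarrow> (psi c t has_integral Wf c t b - Wf c t k) {k..b}" for b
    using W_int[OF t, of k b c] by (rule has_integral_eq[rotated]) (use psi_hi[OF t] k_def in auto)
  show ?thesis
  proof (cases "t \<le> c")
    case True
    have "(psi c t has_integral Qf c k / sqrt 3 + (Wf c t t - Wf c t k)) {0..t}"
      by (rule has_integral_combine[OF k0 P1 P2]) (use k0 t in auto)
    moreover have "Qf c k / sqrt 3 + (Wf c t t - Wf c t k) = Jc c t"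
      unfolding k_def Q_kt W_kt[OF t] W_t[OF t] Jc_def using True
      by (simp add: field_simps)
    ultimately show ?thesis using True by simp
  next
    case False
    show ?thesis
    proof (cases "t < 2*c/sqrt 3")
      case True
      have kc: "k \<le> c" using True unfolding k_def by (simp add: field_simps)
      have "(psi c t has_integral Qf c k / sqrt 3 + (Wf c t c - Wf c t k)) {0..c}"
        by (rule has_integral_combine[OF k0(1) kc P1 P2]) (use k0 t False kc in auto)
      moreover have ct: "c \<le> t" using False by simp
      moreover have "Qf c k / sqrt 3 + (Wf c t c - Wf c t k) = Jc c t"
        unfolding k_def Q_kt W_kt[OF t] W_c[OF c ct] Jc_def using True False
        by (simp add: field_simps)
      ultimately show ?thesis using False by simp
    next
      case True2: False
      have kc: "c \<le> k" using True2 unfolding k_def by (simp add: field_simps)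
      have "(psi c t has_integral Qf c c / sqrt 3) {0..c}"
      proof -
        have "((\<lambda>a. (c-a)^2*(a/sqrt 3)) has_integral Qf c c / sqrt 3) {0..c}"
          using Q_int[of c c] c by (simp add: Q0)
        then show ?thesis by (rule has_integral_eq[rotated]) (use kc in \<open>simp add: psi_lo k_def\<close>)
      qed
      moreover have "Qf c c / sqrt 3 = Jc c t" unfolding Jc_def Qf_def using False True2
        by (simp add: field_simps power4_eq_xxxx power3_eq_cube power2_eq_square)
      ultimately show ?thesis using False by simp
    qed
  qed
qed


definition G1 :: "real \<Rightarrow> real \<Rightarrow> real" where
  "G1 c t = 12*sqrt 3/c^4 * (pi*c^2*t^2/12 - c*t^3/3 + (sqrt 3/32+pi/48)*t^4)"

definition G2 :: "real \<Rightarrow> real \<Rightarrow> real" where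
  "G2 c t = 12*sqrt 3/c^4 * (-pi*c^2*t^2/6 - c*t^3/3 + (sqrt 3/32 - pi/24)*t^4
        + (c^2*t^2/2 + t^4/8)*arcsin(c/t) + c * sqrt(t^2-c^2)*(c^2/12+13*t^2/24))"

lemma G1_deriv:
  assumes r: "0<r" and t: "0<t" "t<3*r/2"
  shows "(G1 (3*r/2) has_real_derivative tri3_density r t) (at t)"
proof -
  have s3: "sqrt 3 * (sqrt 3 * x) = 3 * x" for x by (simp add: mult.assoc[symmetric])
  have tr: "t < sqrt 3 * r"
  proof -
    have "3/2 < sqrt 3" by (rule real_less_rsqrt) (simp add: power2_eq_square)
    hence "3/2*r < sqrt 3 * r" using r by (intro mult_strict_right_mono) auto
    thus ?thesis using t by linarith
  qed
  have "(G1 (3*r/2) has_real_derivative 12*sqrt 3/(3*r/2)^4 * (pi*(3*r/2)^2*t/6 - (3*r/2)*t^2 + (sqrt 3/8+pi/12)*t^3)) (at t)"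
    unfolding G1_def
    apply (rule derivative_eq_intros refl | (simp; fail))+
    using r by (simp add: field_simps)
  moreover have "12*sqrt 3/(3*r/2)^4 * (pi*(3*r/2)^2*t/6 - (3*r/2)*t^2 + (sqrt 3/8+pi/12)*t^3) = tri3_density r t"
    unfolding tri3_density_def tri3_phi_def tri3_area_def tri3_perimeter_def using t tr r
    apply (simp add: field_simps)
    apply (simp add: s3)
    by algebra
  ultimately show ?thesis by simp
qed

lemma G2_deriv:
  assumes r: "0<r" and t: "3*r/2<t" "t < sqrt 3 * r"
  shows "(G2 (3*r/2) has_real_derivative tri3_density r t) (at t)"
proof -
  define c where "c = 3*r/2"
  have c: "0 < c" "c < t" using r t by (auto simp: c_def)
  have s3: "sqrt 3 * (sqrt 3 * x) = 3 * x" for x by (simp add: mult.assoc[symmetric])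
  have lt: "c^2 < t^2" using c by (intro power_strict_mono) auto
  define S where "S = (\<lambda>t. sqrt(t^2-c^2))"
  define AS where "AS = (\<lambda>t. arcsin(c/t))"
  have Sx: "\<And>x. sqrt(x^2-c^2) = S x" "\<And>x. arcsin(c/x) = AS x" by (simp_all add: S_def AS_def)
  have Sp: "S t > 0" "(S t)^2 = t^2-c^2" using lt by (simp_all add: S_def)
  have e: "sqrt(1-(c/t)^2) = S t/t"
  proof -
    have "1-(c/t)^2 = (t^2-c^2)/t^2" using c by (simp add: field_simps power2_eq_square)
    thus ?thesis using c by (simp add: real_sqrt_divide S_def)
  qed
  have d1: "(S has_real_derivative (t/S t)) (at t)"
    unfolding S_def using lt by (auto intro!: derivative_eq_intros simp: field_simps)
  have d2: "(AS has_real_derivative (-c/(t * S t))) (at t)"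
  proof -
    have ct1: "-1 < c/t" "c/t < 1" using c by (auto simp: field_simps)
    have "((\<lambda>t. arcsin(c/t)) has_real_derivative inverse(sqrt(1-(c/t)^2)) * (-c/t^2)) (at t)"
      by (rule DERIV_chain2[OF DERIV_arcsin]) (use ct1 c in \<open>auto intro!: derivative_eq_intros simp: power2_eq_square\<close>)
    moreover have "inverse(sqrt(1-(c/t)^2)) * (-c/t^2) = -c/(t * S t)" using e c Sp by (simp add: field_simps power2_eq_square)
    ultimately show ?thesis by (simp add: AS_def)
  qed
  have tr: "t < sqrt 3 * r" using t by simp
  have "(G2 c has_real_derivative 12*sqrt 3/c^4 * (-pi*c^2*t/3 - c*t^2 + (sqrt 3/8 - pi/6)*t^3
          + (c^2*t + t^3/2)*AS t + 3/2*c*t*S t)) (at t)"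
  proof -
    have "((\<lambda>t. 12*sqrt 3/c^4 * (-pi*c^2*t^2/6 - c*t^3/3 + (sqrt 3/32 - pi/24)*t^4
        + (c^2*t^2/2 + t^4/8)*AS t + c * S t*(c^2/12+13*t^2/24))) has_real_derivative
         12*sqrt 3/c^4 * (-pi*c^2*t/3 - c*t^2 + (sqrt 3/8 - pi/6)*t^3
          + (c^2*t + t^3/2)*AS t + 3/2*c*t*S t)) (at t)"
      apply (rule derivative_eq_intros d1 d2 refl | (simp; fail))+
      using Sp c apply (simp add: field_simps power2_eq_square power3_eq_cube)
      by algebra
    thus ?thesis unfolding G2_def Sx .
  qed
  moreover have "12*sqrt 3/c^4 * (-pi*c^2*t/3 - c*t^2 + (sqrt 3/8 - pi/6)*t^3
          + (c^2*t + t^3/2)*AS t + 3/2*c*t*S t) = tri3_density r t"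
  proof -
    have e1: "t * sqrt (1 - (3*r/(2*t))^2) = S t" using e c unfolding c_def by (simp add: field_simps)
    have e2: "arcsin (3*r/(2*t)) = AS t" unfolding AS_def c_def by (simp add: field_simps)
    have rr: "r = 2*c/3" unfolding c_def by simp
    have "\<not> t < 3*r/2" using t by simp
    then show ?thesis
      unfolding tri3_density_def tri3_phi_def tri3_area_def tri3_perimeter_def using t tr r
      apply (simp add: e1 e2)
      unfolding rr using c apply (simp add: field_simps)
      apply (simp add: s3)
      by algebra
  qed
  ultimately show ?thesis unfolding c_def by simp
qed


lemma sqrt3_mult[simp]: "sqrt 3 * (sqrt 3 * x) = 3 * x" by (simp add: mult.assoc[symmetric])

lemma sqrt3_gt: "3/2 < sqrt 3" by (rule real_less_rsqrt) (simp add: power2_eq_square)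

definition Gc :: "real \<Rightarrow> real \<Rightarrow> real" where
  "Gc r t = (if t \<le> 0 then 0 else if t \<le> 3*r/2 then G1 (3*r/2) t else if t < sqrt 3 * r then G2 (3*r/2) t else 1)"

lemma G1_0: "G1 c 0 = 0" by (simp add: G1_def)

lemma G2_c: "0 < c \<Longrightarrow> G2 c c = G1 c c"
  unfolding G1_def G2_def by (simp add: field_simps)

lemma G2_end: assumes "0<r" shows "G2 (3*r/2) (sqrt 3 * r) = 1"
proof -
  have a: "arcsin (3*r/2/(sqrt 3 * r)) = pi/3"
  proof -
    have "3*r/2/(sqrt 3 * r) = sqrt 3/2" using assms by (simp add: field_simps)
    thus ?thesis using arcsin_sqrt3_2 by metis
  qed
  have "(sqrt 3 * r)^2 - (3*r/2)^2 = (sqrt 3 * r / 2)^2" by (simp add: power2_eq_square field_simps)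
  hence b: "sqrt ((sqrt 3 * r)^2 - (3*r/2)^2) = sqrt 3 * r/2" using assms by simp
  show ?thesis unfolding G2_def a b using assms
    apply (simp add: field_simps)
    by (simp add: power2_eq_square power3_eq_cube power4_eq_xxxx)
qed

lemma dens_int1: assumes r: "0<r" and b: "0 \<le> b" "b \<le> 3*r/2"
  shows "(tri3_density r has_integral G1 (3*r/2) b) {0..b}"
proof -
  have "(tri3_density r has_integral G1 (3*r/2) b - G1 (3*r/2) 0) {0..b}"
  proof (rule fundamental_theorem_of_calculus_interior)
    show "continuous_on {0..b} (G1 (3*r/2))" unfolding G1_def by (intro continuous_intros) auto
    fix x assume "x \<in> {0<..<b}"
    then show "(G1 (3*r/2) has_vector_derivative tri3_density r x) (at x)"
      using G1_deriv[OF r, of x] b by (simp add: has_real_derivative_iff_has_vector_derivative)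
  qed (use b in auto)
  thus ?thesis by (simp add: G1_0)
qed

lemma dens_int2: assumes r: "0<r" and b: "3*r/2 \<le> b" "b \<le> sqrt 3 * r"
  shows "(tri3_density r has_integral G2 (3*r/2) b - G2 (3*r/2) (3*r/2)) {3*r/2..b}"
proof (rule fundamental_theorem_of_calculus_interior)
  show "continuous_on {3*r/2..b} (G2 (3*r/2))" unfolding G2_def using r
    by (intro continuous_intros) (auto simp: field_simps)
  fix x assume "x \<in> {3*r/2<..<b}"
  then show "(G2 (3*r/2) has_vector_derivative tri3_density r x) (at x)"
    using G2_deriv[OF r, of x] b by (simp add: has_real_derivative_iff_has_vector_derivative)
qed (use b in auto)

lemma dens_int0: assumes "sqrt 3 * r \<le> b"
  shows "(tri3_density r has_integral 0) {sqrt 3 * r..b}"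
  using has_integral_0[of "{sqrt 3 * r..b}"]
  by (rule has_integral_eq[rotated]) (auto simp: tri3_density_def)

lemma dens_int: assumes r: "0<r" and x: "0 \<le> x"
  shows "(tri3_density r has_integral Gc r x) {0..x}"
proof -
  have cr: "3*r/2 \<le> sqrt 3 * r" using sqrt3_gt r by simp
  have I1: "(tri3_density r has_integral G1 (3*r/2) (3*r/2)) {0..3*r/2}" using dens_int1[OF r] r by simp
  have I2: "(tri3_density r has_integral G2 (3*r/2) b) {0..b}" if "3*r/2 \<le> b" "b \<le> sqrt 3 * r" for b
  proof -
    have "(tri3_density r has_integral G1 (3*r/2) (3*r/2) + (G2 (3*r/2) b - G2 (3*r/2) (3*r/2))) {0..b}"
      by (rule has_integral_combine[OF _ _ I1 dens_int2[OF r that]]) (use r that in auto)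
    thus ?thesis using G2_c[of "3*r/2"] r by simp
  qed
  show ?thesis
  proof (cases "x \<le> 3*r/2")
    case True
    then show ?thesis using dens_int1[OF r x True] x by (auto simp: Gc_def G1_0)
  next
    case False
    show ?thesis
    proof (cases "x < sqrt 3 * r")
      case True
      then show ?thesis using I2[of x] False by (auto simp: Gc_def)
    next
      case False2: False
      have "(tri3_density r has_integral G2 (3*r/2) (sqrt 3 * r) + 0) {0..x}"
        by (rule has_integral_combine[OF _ _ I2[OF cr order_refl] dens_int0]) (use r False2 in auto)
      thus ?thesis using False False2 G2_end[OF r] by (auto simp: Gc_def)
    qed
  qed
qed


definition tri :: "real \<Rightarrow> real \<Rightarrow> real \<Rightarrow> (real \<times> real) set" where
  "tri c1 c2 c3 = {p. -fst p \<le> c1 \<and> (fst p + sqrt 3 * snd p)/2 \<le> c2 \<and> (fst p - sqrt 3 * snd p)/2 \<le> c3}"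

lemma tri3_eq: assumes r: "0 < r" shows "tri3 r = tri (r/2) (r/2) (r/2)"
proof -
  have s3: "sqrt 3 * sqrt 3 = 3" by simp
  show ?thesis
  unfolding tri3_def convex_hull_3 tri_def
  proof (intro equalityI subsetI)
    fix p assume "p \<in> {u *\<^sub>R (r, 0) + v *\<^sub>R (- r / 2, sqrt 3 * r / 2) + w *\<^sub>R (- r / 2, - sqrt 3 * r / 2) |u v w.
             0 \<le> u \<and> 0 \<le> v \<and> 0 \<le> w \<and> u + v + w = 1}"
    then obtain u v w where uvw: "0 \<le> u" "0 \<le> v" "0 \<le> w" "u + v + w = 1"
      and p: "p = u *\<^sub>R (r, 0) + v *\<^sub>R (- r / 2, sqrt 3 * r / 2) + w *\<^sub>R (- r / 2, - sqrt 3 * r / 2)" by blast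
    have fp: "fst p = u * r - v * r/2 - w * r/2" "snd p = (v - w) * sqrt 3 * r/2" using p by (auto simp: algebra_simps)
    have w: "w = 1 - u - v" using uvw by simp
    have e1: "- fst p = r/2 - 3/2 * (u * r)" unfolding fp w by (simp add: field_simps)
    have sq: "sqrt 3 * snd p = 3 * ((v-w) * r/2)"
    proof -
      have "sqrt 3 * snd p = (sqrt 3 * sqrt 3) * ((v-w) * r/2)" unfolding fp by (simp add: field_simps)
      thus ?thesis by simp
    qed
    have e2: "(fst p + sqrt 3 * snd p)/2 = r/2 - 3/2 * (w * r)" unfolding sq unfolding fp w by (simp add: field_simps)
    have e3: "(fst p - sqrt 3 * snd p)/2 = r/2 - 3/2 * (v * r)" unfolding sq unfolding fp w by (simp add: field_simps)
    have "0 \<le> u * r" "0 \<le> v * r" "0 \<le> w * r" using uvw r by auto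
    then show "p \<in> {p. - fst p \<le> r / 2 \<and> (fst p + sqrt 3 * snd p) / 2 \<le> r / 2 \<and> (fst p - sqrt 3 * snd p) / 2 \<le> r / 2}"
      unfolding mem_Collect_eq e1 e2 e3 by linarith
  next
    fix p assume "p \<in> {p. - fst p \<le> r / 2 \<and> (fst p + sqrt 3 * snd p) / 2 \<le> r / 2 \<and> (fst p - sqrt 3 * snd p) / 2 \<le> r / 2}"
    then have h: "- fst p \<le> r / 2" "(fst p + sqrt 3 * snd p) / 2 \<le> r / 2" "(fst p - sqrt 3 * snd p) / 2 \<le> r / 2" by auto
    obtain x y where p: "p = (x,y)" by fastforce
    define u where "u = (2*x+r)/(3*r)"
    define v where "v = (r - x + sqrt 3 * y)/(3*r)"
    define w where "w = (r - x - sqrt 3 * y)/(3*r)"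
    have "0 \<le> u" "0 \<le> v" "0 \<le> w" using h r unfolding u_def v_def w_def p by (auto simp: field_simps)
    moreover have "u + v + w = 1" using r unfolding u_def v_def w_def by (simp add: field_simps)
    moreover have "p = u *\<^sub>R (r, 0) + v *\<^sub>R (- r / 2, sqrt 3 * r / 2) + w *\<^sub>R (- r / 2, - sqrt 3 * r / 2)"
      using r unfolding u_def v_def w_def p by (auto simp: field_simps s3)
    ultimately show "p \<in> {u *\<^sub>R (r, 0) + v *\<^sub>R (- r / 2, sqrt 3 * r / 2) + w *\<^sub>R (- r / 2, - sqrt 3 * r / 2) |u v w.
             0 \<le> u \<and> 0 \<le> v \<and> 0 \<le> w \<and> u + v + w = 1}" by blast
  qed
qed

lemma tri_closed: "closed (tri c1 c2 c3)"
  unfolding tri_def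
  by (intro closed_Collect_conj closed_Collect_le continuous_intros) auto

lemma tri_sets[measurable]: "tri c1 c2 c3 \<in> sets lborel"
  using tri_closed by (simp add: borel_closed)

lemma slice_tri:
  "Pair x -` tri c1 c2 c3 = (if -x \<le> c1 then {(x - 2*c3)/sqrt 3 .. (2*c2 - x)/sqrt 3} else {})"
  unfolding tri_def by (auto simp: field_simps)

lemma emeasure_Icc_ind:
  "emeasure lborel (if -x \<le> c1 then {(x - 2*c3)/sqrt 3 .. (2*c2 - x)/sqrt 3} else {})
   = ennreal (indicator {-c1..c2+c3} x * (2*(c2+c3-x)/sqrt 3))"
proof (cases "-x \<le> c1")
  case True
  show ?thesis
  proof (cases "x \<le> c2+c3")
    case True2: True
    have "(x - 2*c3)/sqrt 3 \<le> (2*c2 - x)/sqrt 3" using True2 by (simp add: divide_right_mono)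
    then show ?thesis using True True2
      by (simp add: emeasure_lborel_Icc_eq indicator_def field_simps)
  next
    case False
    have "\<not> (x - 2*c3)/sqrt 3 \<le> (2*c2 - x)/sqrt 3" using False by (simp add: divide_le_cancel)
    then show ?thesis using True False by (simp add: emeasure_lborel_Icc_eq indicator_def)
  qed
qed (simp add: indicator_def)

lemma emeasure_tri: "emeasure lborel (tri c1 c2 c3) = ennreal ((max 0 (c1+c2+c3))^2 / sqrt 3)"
proof -
  have "emeasure lborel (tri c1 c2 c3) = emeasure (lborel \<Otimes>\<^sub>M lborel) (tri c1 c2 c3)"
    by (simp add: lborel_prod)
  also have "\<dots> = (\<integral>\<^sup>+x. emeasure lborel (Pair x -` tri c1 c2 c3) \<partial>lborel)"
    by (rule lborel.emeasure_pair_measure_alt) (unfold lborel_prod, simp add: tri_closed borel_closed)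
  also have "\<dots> = (\<integral>\<^sup>+x. ennreal (indicator {-c1..c2+c3} x * (2*(c2+c3-x)/sqrt 3)) \<partial>lborel)"
    unfolding slice_tri emeasure_Icc_ind ..
  also have "\<dots> = ennreal ((max 0 (c1+c2+c3))^2 / sqrt 3)"
  proof (cases "-c1 \<le> c2+c3")
    case True
    define F where "F = (\<lambda>x::real. - ((c2+c3-x)^2/sqrt 3))"
    have "((\<lambda>x. 2*(c2+c3-x)/sqrt 3) has_integral (F (c2+c3) - F (-c1))) {-c1..c2+c3}"
    proof (rule fundamental_theorem_of_calculus)
      fix x :: real
      have "(F has_real_derivative 2*(c2+c3-x)/sqrt 3) (at x within {-c1..c2+c3})"
        unfolding F_def by (rule derivative_eq_intros refl | (simp; fail))+ (simp add: field_simps)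
      thus "(F has_vector_derivative 2*(c2+c3-x)/sqrt 3) (at x within {-c1..c2+c3})"
        by (simp add: has_real_derivative_iff_has_vector_derivative)
    qed (use True in auto)
    hence "((\<lambda>x. 2*(c2+c3-x)/sqrt 3) has_integral (max 0 (c1+c2+c3))^2 / sqrt 3) {-c1..c2+c3}"
      using True by (simp add: F_def add.commute add.left_commute)
    then show ?thesis
      by (rule nn_integral_has_integral_lebesgue[rotated]) (auto simp: field_simps)
  next
    case False
    then show ?thesis by (simp add: indicator_def)
  qed
  finally show ?thesis .
qed


lemma nn_integral_translate:
  fixes g :: "'a::euclidean_space \<Rightarrow> ennreal"
  assumes [measurable]: "g \<in> borel_measurable borel"
  shows "(\<integral>\<^sup>+q. g q \<partial>lborel) = (\<integral>\<^sup>+h. g (p + h) \<partial>lborel)"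
proof -
  have "(\<integral>\<^sup>+q. g q \<partial>lborel) = (\<integral>\<^sup>+q. g q \<partial>distr lborel borel ((+) p))"
    by (simp add: lborel_distr_plus)
  also have "\<dots> = (\<integral>\<^sup>+h. g (p + h) \<partial>lborel)"
    by (subst nn_integral_distr) auto
  finally show ?thesis .
qed

lemma uniform_dens:
  assumes T[measurable]: "T \<in> sets borel" and A: "emeasure lborel T = ennreal A" "0 < A"
  shows "uniform_measure lborel T = density lborel (\<lambda>p. ennreal (1/A) * indicator T p)"
  unfolding uniform_measure_def A
proof (rule density_cong)
  have "1 / ennreal A = ennreal (1/A)" using divide_ennreal[of 1 A] A by simp
  then show "AE x in lborel. indicator T x / ennreal A = ennreal (1/A) * indicator T x"
    using A by (auto simp: indicator_def)
qed measurable

lemma pair_unif: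
  fixes T :: "(real \<times> real) set"
  assumes T[measurable]: "T \<in> sets lborel" and A: "emeasure lborel T = ennreal A" "0 < A"
  shows "emeasure (uniform_measure lborel T \<Otimes>\<^sub>M uniform_measure lborel T) {\<omega>. dist (fst \<omega>) (snd \<omega>) \<le> x}
   = ennreal (1/A^2) * (\<integral>\<^sup>+h. indicator {h. norm h \<le> x} h * emeasure lborel {p. p \<in> T \<and> p + h \<in> T} \<partial>lborel)"
proof -
  let ?U = "uniform_measure lborel T"
  let ?f = "\<lambda>p. ennreal (1/A) * indicator T p"
  have T'[measurable]: "T \<in> sets borel" using T by simp
  have sf: "sigma_finite_measure ?U"
    by (rule prob_space_imp_sigma_finite, rule prob_space_uniform_measure) (use A in auto)
  have U: "?U = density lborel ?f" by (rule uniform_dens[OF T' A])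
  have "?U \<Otimes>\<^sub>M ?U = density (lborel \<Otimes>\<^sub>M lborel) (\<lambda>(p,q). ?f p * ?f q)"
    unfolding U by (rule pair_measure_density) (use sf U lborel.sigma_finite_measure_axioms in auto)
  hence "emeasure (?U \<Otimes>\<^sub>M ?U) {\<omega>. dist (fst \<omega>) (snd \<omega>) \<le> x}
     = (\<integral>\<^sup>+\<omega>. (\<lambda>(p,q). ?f p * ?f q) \<omega> * indicator {\<omega>. dist (fst \<omega>) (snd \<omega>) \<le> x} \<omega> \<partial>(lborel \<Otimes>\<^sub>M lborel))"
  proof -
    have "{\<omega> \<in> space (lborel \<Otimes>\<^sub>M lborel). dist (fst \<omega>) (snd \<omega>) \<le> x} \<in> sets (lborel \<Otimes>\<^sub>M lborel)" by measurable
    hence S: "{\<omega>. dist (fst \<omega>) (snd \<omega>) \<le> x} \<in> sets (lborel \<Otimes>\<^sub>M lborel)" by (simp add: space_pair_measure)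
    assume eq: "?U \<Otimes>\<^sub>M ?U = density (lborel \<Otimes>\<^sub>M lborel) (\<lambda>(p,q). ?f p * ?f q)"
    show ?thesis unfolding eq by (rule emeasure_density) (use S in auto)
  qed
  also have "\<dots> = (\<integral>\<^sup>+p. \<integral>\<^sup>+q. ?f p * ?f q * indicator {\<omega>. dist (fst \<omega>) (snd \<omega>) \<le> x} (p,q) \<partial>lborel \<partial>lborel)"
    by (subst lborel.nn_integral_fst[symmetric]) (auto simp: case_prod_beta)
  also have "\<dots> = (\<integral>\<^sup>+p. \<integral>\<^sup>+h. ennreal (1/A^2) * (indicator T p * indicator T (p+h) * indicator {h. norm h \<le> x} h) \<partial>lborel \<partial>lborel)"
  proof (rule nn_integral_cong)
    fix p :: "real \<times> real"
    have "(\<integral>\<^sup>+q. ?f p * ?f q * indicator {\<omega>. dist (fst \<omega>) (snd \<omega>) \<le> x} (p,q) \<partial>lborel)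
       = (\<integral>\<^sup>+h. ?f p * ?f (p+h) * indicator {\<omega>. dist (fst \<omega>) (snd \<omega>) \<le> x} (p,p+h) \<partial>lborel)"
      by (rule nn_integral_translate) simp
    also have "\<dots> = (\<integral>\<^sup>+h. ennreal (1/A^2) * (indicator T p * indicator T (p+h) * indicator {h. norm h \<le> x} h) \<partial>lborel)"
      using A by (intro nn_integral_cong) (auto simp: indicator_def dist_norm ennreal_mult'[symmetric] power2_eq_square)
    finally show "(\<integral>\<^sup>+q. ?f p * ?f q * indicator {\<omega>. dist (fst \<omega>) (snd \<omega>) \<le> x} (p,q) \<partial>lborel)
       = (\<integral>\<^sup>+h. ennreal (1/A^2) * (indicator T p * indicator T (p+h) * indicator {h. norm h \<le> x} h) \<partial>lborel)" .
  qed
  also have "\<dots> = ennreal (1/A^2) * (\<integral>\<^sup>+p. \<integral>\<^sup>+h. indicator T p * indicator T (p+h) * indicator {h. norm h \<le> x} h \<partial>lborel \<partial>lborel)"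
    by (simp add: nn_integral_cmult)
  also have "(\<integral>\<^sup>+p. \<integral>\<^sup>+h. indicator T p * indicator T (p+h) * indicator {h. norm h \<le> x} h \<partial>lborel \<partial>lborel)
     = (\<integral>\<^sup>+h. \<integral>\<^sup>+p. indicator T p * indicator T (p+h) * indicator {h. norm h \<le> x} h \<partial>lborel \<partial>lborel)"
    by (rule lborel_pair.Fubini'[symmetric]) simp
  also have "\<dots> = (\<integral>\<^sup>+h. indicator {h. norm h \<le> x} h * emeasure lborel {p. p \<in> T \<and> p + h \<in> T} \<partial>lborel)"
  proof (rule nn_integral_cong)
    fix h :: "real \<times> real"
    have m: "{p. p \<in> T \<and> p + h \<in> T} \<in> sets lborel" by measurable
    have "emeasure lborel {p. p \<in> T \<and> p + h \<in> T} = (\<integral>\<^sup>+p. indicator {p. p \<in> T \<and> p + h \<in> T} p \<partial>lborel)"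
      by (rule nn_integral_indicator[symmetric, OF m])
    also have "\<dots> = (\<integral>\<^sup>+p. indicator T p * indicator T (p+h) \<partial>lborel)"
      by (intro nn_integral_cong) (simp add: indicator_def)
    finally have em: "emeasure lborel {p. p \<in> T \<and> p + h \<in> T} = (\<integral>\<^sup>+p. indicator T p * indicator T (p+h) \<partial>lborel)" .
    thus "(\<integral>\<^sup>+p. indicator T p * indicator T (p+h) * indicator {h. norm h \<le> x} h \<partial>lborel)
      = indicator {h. norm h \<le> x} h * emeasure lborel {p. p \<in> T \<and> p + h \<in> T}"
    proof -
      have "(\<integral>\<^sup>+p. indicator T p * indicator T (p+h) * indicator {h. norm h \<le> x} h \<partial>lborel)
        = (\<integral>\<^sup>+p. indicator T p * indicator T (p+h) \<partial>lborel) * indicator {h. norm h \<le> x} h"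
        by (rule nn_integral_multc) measurable
      thus ?thesis using em by (simp add: mult.commute)
    qed
  qed
  finally show ?thesis .
qed


definition l1 :: "real \<times> real \<Rightarrow> real" where "l1 h = - fst h"
definition l2 :: "real \<times> real \<Rightarrow> real" where "l2 h = (fst h + sqrt 3 * snd h)/2"
definition l3 :: "real \<times> real \<Rightarrow> real" where "l3 h = (fst h - sqrt 3 * snd h)/2"
definition Gm :: "real \<times> real \<Rightarrow> real" where "Gm h = max 0 (l1 h) + max 0 (l2 h) + max 0 (l3 h)"
definition Kf :: "real \<Rightarrow> real \<times> real \<Rightarrow> real" where "Kf r h = (max 0 (3*r/2 - Gm h))^2 / sqrt 3"

lemma l_sum: "l1 h + l2 h + l3 h = 0" by (simp add: l1_def l2_def l3_def field_simps)

lemma cov_set: "{p. p \<in> tri3 r \<and> p + h \<in> tri3 r} = tri (r/2 - max 0 (l1 h)) (r/2 - max 0 (l2 h)) (r/2 - max 0 (l3 h))"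
  if "0 < r"
  unfolding tri3_eq[OF that] tri_def l1_def l2_def l3_def
  by (auto simp: field_simps max_def)

lemma cov: "0 < r \<Longrightarrow> emeasure lborel {p. p \<in> tri3 r \<and> p + h \<in> tri3 r} = ennreal (Kf r h)"
  unfolding cov_set emeasure_tri Kf_def Gm_def by (simp add: algebra_simps)


lemma sets_lborel_pair: "sets (lborel \<Otimes>\<^sub>M lborel :: (real \<times> real) measure) = sets borel"
  by (simp only: lborel_prod sets_lborel)

lemma meas_pair: "f \<in> borel_measurable borel \<Longrightarrow> f \<in> borel_measurable (lborel \<Otimes>\<^sub>M lborel :: (real \<times> real) measure)"
  using measurable_cong_sets[OF sets_lborel_pair refl] by blast

lemma shearX:
  fixes f :: "real \<times> real \<Rightarrow> ennreal"
  assumes [measurable]: "f \<in> borel_measurable borel"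
  shows "(\<integral>\<^sup>+h. f (fst h + k * snd h, snd h) \<partial>lborel) = (\<integral>\<^sup>+h. f h \<partial>lborel)"
proof -
  have [measurable]: "f \<in> borel_measurable (lborel \<Otimes>\<^sub>M lborel)" by (rule meas_pair) fact
  have "(\<integral>\<^sup>+h. f (fst h + k * snd h, snd h) \<partial>lborel) = (\<integral>\<^sup>+h. f (fst h + k * snd h, snd h) \<partial>(lborel \<Otimes>\<^sub>M lborel))"
    by (simp only: lborel_prod)
  also have "\<dots> = (\<integral>\<^sup>+b. \<integral>\<^sup>+a. f (a + k * b, b) \<partial>lborel \<partial>lborel)"
    by (subst lborel_pair.nn_integral_snd[symmetric]) auto
  also have "\<dots> = (\<integral>\<^sup>+b. \<integral>\<^sup>+a. f (a, b) \<partial>lborel \<partial>lborel)"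
  proof (rule nn_integral_cong)
    fix b :: real
    show "(\<integral>\<^sup>+a. f (a + k * b, b) \<partial>lborel) = (\<integral>\<^sup>+a. f (a, b) \<partial>lborel)"
      using nn_integral_real_affine[of "\<lambda>a. f (a, b)" 1 "k*b"] by (simp add: add.commute)
  qed
  also have "\<dots> = (\<integral>\<^sup>+h. f h \<partial>(lborel \<Otimes>\<^sub>M lborel))"
    by (subst lborel_pair.nn_integral_snd[symmetric]) auto
  also have "\<dots> = (\<integral>\<^sup>+h. f h \<partial>lborel)" by (simp only: lborel_prod)
  finally show ?thesis .
qed

lemma shearY:
  fixes f :: "real \<times> real \<Rightarrow> ennreal"
  assumes [measurable]: "f \<in> borel_measurable borel"
  shows "(\<integral>\<^sup>+h. f (fst h, snd h + k * fst h) \<partial>lborel) = (\<integral>\<^sup>+h. f h \<partial>lborel)"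
proof -
  have [measurable]: "f \<in> borel_measurable (lborel \<Otimes>\<^sub>M lborel)" by (rule meas_pair) fact
  have "(\<integral>\<^sup>+h. f (fst h, snd h + k * fst h) \<partial>lborel) = (\<integral>\<^sup>+h. f (fst h, snd h + k * fst h) \<partial>(lborel \<Otimes>\<^sub>M lborel))"
    by (simp only: lborel_prod)
  also have "\<dots> = (\<integral>\<^sup>+a. \<integral>\<^sup>+b. f (a, b + k * a) \<partial>lborel \<partial>lborel)"
    by (subst lborel.nn_integral_fst[symmetric]) auto
  also have "\<dots> = (\<integral>\<^sup>+a. \<integral>\<^sup>+b. f (a, b) \<partial>lborel \<partial>lborel)"
  proof (rule nn_integral_cong)
    fix a :: real
    show "(\<integral>\<^sup>+b. f (a, b + k * a) \<partial>lborel) = (\<integral>\<^sup>+b. f (a, b) \<partial>lborel)"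
      using nn_integral_real_affine[of "\<lambda>b. f (a, b)" 1 "k*a"] by (simp add: add.commute)
  qed
  also have "\<dots> = (\<integral>\<^sup>+h. f h \<partial>(lborel \<Otimes>\<^sub>M lborel))"
    by (subst lborel.nn_integral_fst[symmetric]) auto
  also have "\<dots> = (\<integral>\<^sup>+h. f h \<partial>lborel)" by (simp only: lborel_prod)
  finally show ?thesis .
qed

definition rot :: "real \<times> real \<Rightarrow> real \<times> real" where
  "rot h = ((fst h - sqrt 3 * snd h)/2, (sqrt 3 * fst h + snd h)/2)"

lemma rot_measurable[measurable]: "rot \<in> borel_measurable borel"
  unfolding rot_def by (intro borel_measurable_continuous_onI continuous_intros) auto

lemma rot_inv:
  fixes f :: "real \<times> real \<Rightarrow> ennreal"
  assumes [measurable]: "f \<in> borel_measurable borel"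
  shows "(\<integral>\<^sup>+h. f (rot h) \<partial>lborel) = (\<integral>\<^sup>+h. f h \<partial>lborel)"
proof -
  let ?X = "\<lambda>h::real\<times>real. (fst h + (-1/sqrt 3) * snd h, snd h)"
  let ?Y = "\<lambda>h::real\<times>real. (fst h, snd h + (sqrt 3/2) * fst h)"
  have eq: "rot h = ?X (?Y (?X h))" for h
    unfolding rot_def by (simp add: field_simps)
  have [measurable]: "?X \<in> borel_measurable borel" "?Y \<in> borel_measurable borel"
    by (intro borel_measurable_continuous_onI continuous_intros)+
  have "(\<integral>\<^sup>+h. f (rot h) \<partial>lborel) = (\<integral>\<^sup>+h. (\<lambda>h. (\<lambda>h. f (?X h)) (?Y h)) (?X h) \<partial>lborel)"
    unfolding eq ..
  also have "\<dots> = (\<integral>\<^sup>+h. (\<lambda>h. f (?X h)) (?Y h) \<partial>lborel)"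
    by (rule shearX) measurable
  also have "\<dots> = (\<integral>\<^sup>+h. f (?X h) \<partial>lborel)"
    by (rule shearY) measurable
  also have "\<dots> = (\<integral>\<^sup>+h. f h \<partial>lborel)"
    by (rule shearX) measurable
  finally show ?thesis .
qed


lemma l_rot: "l1 (rot h) = - l3 h" "l2 (rot h) = - l1 h" "l3 (rot h) = - l2 h"
  unfolding l1_def l2_def l3_def rot_def by (simp_all add: field_simps)

lemma Gm_rot: "Gm (rot h) = Gm h"
proof -
  have "Gm (rot h) = max 0 (- l3 h) + max 0 (- l1 h) + max 0 (- l2 h)" unfolding Gm_def l_rot ..
  also have "\<dots> = Gm h" unfolding Gm_def using l_sum[of h] by (simp add: max_def)
  finally show ?thesis .
qed

lemma norm_rot: "norm (rot h) = norm h"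
proof -
  have "(fst (rot h))^2 + (snd (rot h))^2 = (fst h)^2 + (snd h)^2"
    unfolding rot_def by (simp add: field_simps power2_eq_square)
  thus ?thesis by (simp add: norm_Pair[of "fst (rot h)" "snd (rot h)", simplified] norm_Pair[of "fst h" "snd h", simplified])
qed

definition P1 :: "(real \<times> real) set" where "P1 = {h. \<bar>l2 h\<bar> \<le> \<bar>l1 h\<bar> \<and> \<bar>l3 h\<bar> < \<bar>l1 h\<bar>}"
definition P2 :: "(real \<times> real) set" where "P2 = {h. \<bar>l3 h\<bar> \<le> \<bar>l2 h\<bar> \<and> \<bar>l1 h\<bar> < \<bar>l2 h\<bar>}"
definition P3 :: "(real \<times> real) set" where "P3 = {h. \<bar>l1 h\<bar> \<le> \<bar>l3 h\<bar> \<and> \<bar>l2 h\<bar> < \<bar>l3 h\<bar>}"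

lemma rot_P: "rot h \<in> P2 \<longleftrightarrow> h \<in> P1" "rot h \<in> P3 \<longleftrightarrow> h \<in> P2"
  by (simp_all add: P1_def P2_def P3_def l_rot)

lemma l_meas[measurable]: "l1 \<in> borel_measurable borel" "l2 \<in> borel_measurable borel" "l3 \<in> borel_measurable borel"
  unfolding l1_def l2_def l3_def by (intro borel_measurable_continuous_onI continuous_intros; simp)+

lemma P_sets[measurable]: "P1 \<in> sets borel" "P2 \<in> sets borel" "P3 \<in> sets borel"
proof -
  have "P1 = {h \<in> space borel. \<bar>l2 h\<bar> \<le> \<bar>l1 h\<bar> \<and> \<bar>l3 h\<bar> < \<bar>l1 h\<bar>}" by (simp add: P1_def)
  also have "\<dots> \<in> sets borel" by measurable
  finally show "P1 \<in> sets borel" .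
  have "P2 = {h \<in> space borel. \<bar>l3 h\<bar> \<le> \<bar>l2 h\<bar> \<and> \<bar>l1 h\<bar> < \<bar>l2 h\<bar>}" by (simp add: P2_def)
  also have "\<dots> \<in> sets borel" by measurable
  finally show "P2 \<in> sets borel" .
  have "P3 = {h \<in> space borel. \<bar>l1 h\<bar> \<le> \<bar>l3 h\<bar> \<and> \<bar>l2 h\<bar> < \<bar>l3 h\<bar>}" by (simp add: P3_def)
  also have "\<dots> \<in> sets borel" by measurable
  finally show "P3 \<in> sets borel" .
qed

lemma partition3:
  fixes a b c :: real
  assumes "a + b + c = 0" "\<not> (a = 0 \<and> b = 0 \<and> c = 0)"
  shows "(\<bar>b\<bar> \<le> \<bar>a\<bar> \<and> \<bar>c\<bar> < \<bar>a\<bar>) \<and> \<not>(\<bar>c\<bar> \<le> \<bar>b\<bar> \<and> \<bar>a\<bar> < \<bar>b\<bar>) \<and> \<not>(\<bar>a\<bar> \<le> \<bar>c\<bar> \<and> \<bar>b\<bar> < \<bar>c\<bar>)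
       \<or> \<not>(\<bar>b\<bar> \<le> \<bar>a\<bar> \<and> \<bar>c\<bar> < \<bar>a\<bar>) \<and> (\<bar>c\<bar> \<le> \<bar>b\<bar> \<and> \<bar>a\<bar> < \<bar>b\<bar>) \<and> \<not>(\<bar>a\<bar> \<le> \<bar>c\<bar> \<and> \<bar>b\<bar> < \<bar>c\<bar>)
       \<or> \<not>(\<bar>b\<bar> \<le> \<bar>a\<bar> \<and> \<bar>c\<bar> < \<bar>a\<bar>) \<and> \<not>(\<bar>c\<bar> \<le> \<bar>b\<bar> \<and> \<bar>a\<bar> < \<bar>b\<bar>) \<and> (\<bar>a\<bar> \<le> \<bar>c\<bar> \<and> \<bar>b\<bar> < \<bar>c\<bar>)"
  using assms by (auto simp: abs_if split: if_splits)

lemma l_zero: "l1 h = 0 \<and> l2 h = 0 \<and> l3 h = 0 \<Longrightarrow> h = 0"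
  unfolding l1_def l2_def l3_def by (cases h) (auto simp: zero_prod_def)

lemma ind_sum: "h \<noteq> 0 \<Longrightarrow> indicator P1 h + indicator P2 h + indicator P3 h = (1::ennreal)"
  using partition3[OF l_sum[of h]] l_zero[of h] unfolding P1_def P2_def P3_def
  by (auto simp: indicator_def)

lemma Kf_meas[measurable]: "Kf r \<in> borel_measurable borel"
  unfolding Kf_def Gm_def l1_def l2_def l3_def
  by (intro borel_measurable_continuous_onI continuous_intros; simp)

lemma Kf_rot: "Kf r (rot h) = Kf r h" unfolding Kf_def Gm_rot ..

lemma three_sectors:
  fixes x r :: real
  defines "\<Phi> \<equiv> \<lambda>h. indicator {h. norm h \<le> x} h * ennreal (Kf r h)"
  shows "(\<integral>\<^sup>+h. \<Phi> h \<partial>lborel) = 3 * (\<integral>\<^sup>+h. \<Phi> h * indicator P1 h \<partial>lborel)"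
proof -
  have [measurable]: "\<Phi> \<in> borel_measurable borel" unfolding \<Phi>_def by measurable
  have Pr: "\<Phi> (rot h) = \<Phi> h" for h by (simp add: \<Phi>_def Kf_rot norm_rot indicator_def)
  have "(\<integral>\<^sup>+h. \<Phi> h \<partial>lborel) = (\<integral>\<^sup>+h. \<Phi> h * indicator P1 h + \<Phi> h * indicator P2 h + \<Phi> h * indicator P3 h \<partial>lborel)"
  proof (rule nn_integral_cong_AE)
    show "AE h in lborel. \<Phi> h = \<Phi> h * indicator P1 h + \<Phi> h * indicator P2 h + \<Phi> h * indicator P3 h"
      using AE_lborel_singleton[of 0]
    proof eventually_elim
      case (elim h)
      then show ?case using ind_sum[of h] by (simp add: distrib_left[symmetric])
    qed
  qed
  also have "\<dots> = (\<integral>\<^sup>+h. \<Phi> h * indicator P1 h \<partial>lborel) + (\<integral>\<^sup>+h. \<Phi> h * indicator P2 h \<partial>lborel) + (\<integral>\<^sup>+h. \<Phi> h * indicator P3 h \<partial>lborel)"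
    by (simp add: nn_integral_add)
  also have "(\<integral>\<^sup>+h. \<Phi> h * indicator P2 h \<partial>lborel) = (\<integral>\<^sup>+h. \<Phi> h * indicator P1 h \<partial>lborel)"
  proof -
    have "(\<integral>\<^sup>+h. \<Phi> h * indicator P2 h \<partial>lborel) = (\<integral>\<^sup>+h. \<Phi> (rot h) * indicator P2 (rot h) \<partial>lborel)"
      by (rule rot_inv[where f="\<lambda>h. \<Phi> h * indicator P2 h", symmetric]) measurable
    also have "\<dots> = (\<integral>\<^sup>+h. \<Phi> h * indicator P1 h \<partial>lborel)"
      by (intro nn_integral_cong) (simp add: Pr indicator_def rot_P)
    finally show ?thesis .
  qed
  also have "(\<integral>\<^sup>+h. \<Phi> h * indicator P3 h \<partial>lborel) = (\<integral>\<^sup>+h. \<Phi> h * indicator P1 h \<partial>lborel)"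
  proof -
    have "(\<integral>\<^sup>+h. \<Phi> h * indicator P3 h \<partial>lborel) = (\<integral>\<^sup>+h. \<Phi> (rot h) * indicator P3 (rot h) \<partial>lborel)"
      by (rule rot_inv[where f="\<lambda>h. \<Phi> h * indicator P3 h", symmetric]) measurable
    also have "\<dots> = (\<integral>\<^sup>+h. \<Phi> h * indicator P2 h \<partial>lborel)"
      by (intro nn_integral_cong) (simp add: Pr indicator_def rot_P)
    also have "\<dots> = (\<integral>\<^sup>+h. \<Phi> (rot h) * indicator P2 (rot h) \<partial>lborel)"
      by (rule rot_inv[where f="\<lambda>h. \<Phi> h * indicator P2 h", symmetric]) measurable
    also have "\<dots> = (\<integral>\<^sup>+h. \<Phi> h * indicator P1 h \<partial>lborel)"
      by (intro nn_integral_cong) (simp add: Pr indicator_def rot_P)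
    finally show ?thesis .
  qed
  moreover have "3 * y = y + y + y" for y :: ennreal
  proof -
    have h3: "(3::ennreal) = 1 + 1 + 1" by simp
    show ?thesis by (simp only: h3 distrib_right mult_1)
  qed
  ultimately show ?thesis by simp
qed


definition Lf :: "real \<Rightarrow> real \<Rightarrow> real" where
  "Lf x a = (if \<bar>a\<bar> \<le> x then min (\<bar>a\<bar>/sqrt 3) (sqrt(x^2-a^2)) else 0)"

lemma max3: "(a::real) + b + c = 0 \<Longrightarrow> \<bar>b\<bar> \<le> \<bar>a\<bar> \<Longrightarrow> \<bar>c\<bar> \<le> \<bar>a\<bar> \<Longrightarrow> max 0 a + max 0 b + max 0 c = \<bar>a\<bar>"
  by (auto simp: max_def abs_if)

lemma Gm_P1: "h \<in> P1 \<Longrightarrow> Gm h = \<bar>fst h\<bar>"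
  using max3[OF l_sum[of h]] unfolding P1_def Gm_def by (auto simp: l1_def)

lemma norm_pair_le: "norm (a::real, b::real) \<le> x \<longleftrightarrow> 0 \<le> x \<and> a^2 + b^2 \<le> x^2"
proof -
  have n: "norm (a,b) = sqrt (a^2+b^2)" by (simp add: norm_Pair)
  show ?thesis unfolding n
    by (metis add_nonneg_nonneg real_le_lsqrt real_sqrt_le_iff real_sqrt_ge_zero zero_le_power2 real_le_rsqrt order_trans sqrt_le_D)
qed

lemma abs_le_sqrt_iff: "0 \<le> y \<Longrightarrow> \<bar>b::real\<bar> \<le> sqrt y \<longleftrightarrow> b^2 \<le> y"
  by (metis real_sqrt_abs real_sqrt_le_iff)
lemma abs_less_sqrt_iff: "0 \<le> y \<Longrightarrow> \<bar>b::real\<bar> < sqrt y \<longleftrightarrow> b^2 < y"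
  by (metis real_sqrt_abs real_sqrt_less_iff)

lemma sliceB:
  fixes a x :: real
  defines "B \<equiv> {b. (a,b) \<in> P1 \<and> norm (a,b) \<le> x}"
  shows "emeasure lborel B = ennreal (2 * Lf x a)"
proof -
  have B_char: "b \<in> B \<longleftrightarrow> \<bar>a - sqrt 3 * b\<bar> < 2*\<bar>a\<bar> \<and> \<bar>a + sqrt 3 * b\<bar> \<le> 2*\<bar>a\<bar> \<and> 0 \<le> x \<and> a^2+b^2 \<le> x^2" for b
    unfolding B_def P1_def l1_def l2_def l3_def norm_pair_le by auto
  show ?thesis
  proof (cases "0 < \<bar>a\<bar> \<and> \<bar>a\<bar> \<le> x")
    case False
    have "B = {}"
    proof -
      { fix b assume b: "b \<in> B"
        have "a^2 \<le> x^2" "0 \<le> x" using b B_char[of b] by (auto intro: order_trans[OF _ _]) (smt (verit) zero_le_power2)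
        hence "\<bar>a\<bar> \<le> x" by (metis abs_le_square_iff abs_of_nonneg)
        moreover have "a \<noteq> 0" using b B_char[of b] by auto
        ultimately have False using False by auto }
      thus ?thesis by auto
    qed
    moreover have "Lf x a = 0" using False unfolding Lf_def by auto
    ultimately show ?thesis by simp
  next
    case True
    define m where "m = min (\<bar>a\<bar>/sqrt 3) (sqrt(x^2-a^2))"
    have xa: "0 \<le> x^2-a^2" using True by (simp add: abs_le_square_iff[symmetric]) (metis abs_le_square_iff abs_of_nonneg order_trans abs_ge_zero)
    have m0: "0 \<le> m" unfolding m_def using xa by simp
    have s3: "sqrt 3 * sqrt 3 = 3" by simp
    have sub1: "{-m<..<m} \<subseteq> B"
    proof
      fix b assume "b \<in> {-m<..<m}"
      hence b1: "\<bar>b\<bar> < \<bar>a\<bar>/sqrt 3" and b2: "\<bar>b\<bar> < sqrt(x^2-a^2)" unfolding m_def by auto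
      from b1 have "\<bar>sqrt 3 * b\<bar> < \<bar>a\<bar>" by (simp add: field_simps abs_mult)
      moreover from b2 have "b^2 < x^2-a^2" using abs_less_sqrt_iff[OF xa] by simp
      ultimately show "b \<in> B" unfolding B_char using True by auto
    qed
    have sub2: "B \<subseteq> {-m..m}"
    proof
      fix b assume "b \<in> B"
      hence h: "\<bar>a - sqrt 3 * b\<bar> < 2*\<bar>a\<bar>" "\<bar>a + sqrt 3 * b\<bar> \<le> 2*\<bar>a\<bar>" "a^2+b^2 \<le> x^2" unfolding B_char by auto
      have gen: "\<bar>a - y\<bar> < 2*\<bar>a\<bar> \<Longrightarrow> \<bar>a + y\<bar> \<le> 2*\<bar>a\<bar> \<Longrightarrow> \<bar>y\<bar> \<le> \<bar>a\<bar>" for y :: real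
        by arith
      have "\<bar>sqrt 3 * b\<bar> \<le> \<bar>a\<bar>" using gen[OF h(1,2)] .
      hence b1: "\<bar>b\<bar> \<le> \<bar>a\<bar>/sqrt 3" by (simp add: field_simps abs_mult)
      have b2: "\<bar>b\<bar> \<le> sqrt(x^2-a^2)" using h(3) abs_le_sqrt_iff[OF xa] by simp
      show "b \<in> {-m..m}" using b1 b2 unfolding m_def by auto
    qed
    have Bm: "B \<in> sets lborel" unfolding B_def
    proof -
      have "{b. (a,b) \<in> P1 \<and> norm (a,b) \<le> x} = {b \<in> space borel. (a,b) \<in> P1 \<and> norm (a,b) \<le> x}" by simp
      also have "\<dots> \<in> sets borel" by measurable
      finally show "{b. (a,b) \<in> P1 \<and> norm (a,b) \<le> x} \<in> sets lborel" by simp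
    qed
    have "emeasure lborel {-m<..<m} \<le> emeasure lborel B" by (rule emeasure_mono[OF sub1 Bm])
    moreover have "emeasure lborel B \<le> emeasure lborel {-m..m}" by (rule emeasure_mono[OF sub2]) simp
    ultimately have "emeasure lborel B = ennreal (2*m)" using m0 by (auto intro: antisym)
    moreover have "Lf x a = m" unfolding Lf_def m_def using True by simp
    ultimately show ?thesis by simp
  qed
qed

lemma B_sets: "{b. (a,b) \<in> P1 \<and> norm (a,b) \<le> x} \<in> sets lborel"
proof -
  have "{b. (a,b) \<in> P1 \<and> norm (a,b) \<le> x} = {b \<in> space borel. (a,b) \<in> P1 \<and> norm (a,b) \<le> x}" by simp
  also have "\<dots> \<in> sets borel" by measurable
  finally show ?thesis by simp
qed

lemma P1_int:
  fixes x r :: real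
  shows "(\<integral>\<^sup>+h. indicator {h. norm h \<le> x} h * ennreal (Kf r h) * indicator P1 h \<partial>lborel)
    = (\<integral>\<^sup>+a. ennreal ((max 0 (3*r/2 - \<bar>a\<bar>))^2/sqrt 3 * (2 * Lf x a)) \<partial>lborel)"
proof -
  let ?F = "\<lambda>h. indicator {h. norm h \<le> x} h * ennreal (Kf r h) * indicator P1 h"
  have [measurable]: "?F \<in> borel_measurable borel" by measurable
  have [measurable]: "?F \<in> borel_measurable (lborel \<Otimes>\<^sub>M lborel)" by (rule meas_pair) measurable
  have "(\<integral>\<^sup>+h. ?F h \<partial>lborel) = (\<integral>\<^sup>+h. ?F h \<partial>(lborel \<Otimes>\<^sub>M lborel))" by (simp only: lborel_prod)
  also have "\<dots> = (\<integral>\<^sup>+a. \<integral>\<^sup>+b. ?F (a,b) \<partial>lborel \<partial>lborel)"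
    by (rule lborel.nn_integral_fst[symmetric]) measurable
  also have "\<dots> = (\<integral>\<^sup>+a. ennreal ((max 0 (3*r/2 - \<bar>a\<bar>))^2/sqrt 3 * (2 * Lf x a)) \<partial>lborel)"
  proof (rule nn_integral_cong)
    fix a :: real
    have "(\<integral>\<^sup>+b. ?F (a,b) \<partial>lborel) = (\<integral>\<^sup>+b. ennreal ((max 0 (3*r/2 - \<bar>a\<bar>))^2/sqrt 3) * indicator {b. (a,b) \<in> P1 \<and> norm (a,b) \<le> x} b \<partial>lborel)"
    proof -
      have sq: "\<bar>u\<bar> \<le> v \<Longrightarrow> u^2 \<le> v^2" for u v :: real by (metis abs_ge_zero order_trans power2_abs power_mono)
      show ?thesis by (intro nn_integral_cong) (auto simp: indicator_def Kf_def Gm_P1 intro: sq)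
    qed
    also have "\<dots> = ennreal ((max 0 (3*r/2 - \<bar>a\<bar>))^2/sqrt 3) * emeasure lborel {b. (a,b) \<in> P1 \<and> norm (a,b) \<le> x}"
      by (rule nn_integral_cmult_indicator[OF B_sets])
    also have "\<dots> = ennreal ((max 0 (3*r/2 - \<bar>a\<bar>))^2/sqrt 3 * (2 * Lf x a))"
    proof -
      have sq: "\<bar>u\<bar> \<le> v \<Longrightarrow> u^2 \<le> v^2" for u v :: real by (metis abs_ge_zero order_trans power2_abs power_mono)
      have "0 \<le> Lf x a" unfolding Lf_def using sq[of a x] by auto
      thus ?thesis unfolding sliceB by (intro ennreal_mult[symmetric]) auto
    qed
    finally show "(\<integral>\<^sup>+b. ?F (a,b) \<partial>lborel) = ennreal ((max 0 (3*r/2 - \<bar>a\<bar>))^2/sqrt 3 * (2 * Lf x a))" .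
  qed
  finally show ?thesis .
qed


lemma even_int:
  fixes f :: "real \<Rightarrow> real"
  assumes [measurable]: "f \<in> borel_measurable borel" and f0: "f 0 = 0"
  shows "(\<integral>\<^sup>+a. ennreal (f \<bar>a\<bar>) \<partial>lborel) = 2 * (\<integral>\<^sup>+a. ennreal (indicator {0..} a * f a) \<partial>lborel)"
proof -
  have "(\<integral>\<^sup>+a. ennreal (f \<bar>a\<bar>) \<partial>lborel) = (\<integral>\<^sup>+a. ennreal (f \<bar>a\<bar>) * indicator {..0} a + ennreal (f \<bar>a\<bar>) * indicator {0<..} a \<partial>lborel)"
    by (intro nn_integral_cong) (auto simp: indicator_def)
  also have "\<dots> = (\<integral>\<^sup>+a. ennreal (f \<bar>a\<bar>) * indicator {..0} a \<partial>lborel) + (\<integral>\<^sup>+a. ennreal (f \<bar>a\<bar>) * indicator {0<..} a \<partial>lborel)"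
    by (rule nn_integral_add) measurable
  also have "(\<integral>\<^sup>+a. ennreal (f \<bar>a\<bar>) * indicator {..0} a \<partial>lborel) = (\<integral>\<^sup>+a. ennreal (indicator {0..} a * f a) \<partial>lborel)"
  proof -
    have "(\<integral>\<^sup>+a. ennreal (f \<bar>a\<bar>) * indicator {..0} a \<partial>lborel) = (\<integral>\<^sup>+a. ennreal (f \<bar>0 + -1 * a\<bar>) * indicator {..0} (0 + -1 * a) \<partial>lborel)"
      using nn_integral_real_affine[of "\<lambda>a. ennreal (f \<bar>a\<bar>) * indicator {..0} a" "-1" 0] by simp
    also have "\<dots> = (\<integral>\<^sup>+a. ennreal (indicator {0..} a * f a) \<partial>lborel)"
      by (intro nn_integral_cong) (auto simp: indicator_def)
    finally show ?thesis .
  qed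
  also have "(\<integral>\<^sup>+a. ennreal (f \<bar>a\<bar>) * indicator {0<..} a \<partial>lborel) = (\<integral>\<^sup>+a. ennreal (indicator {0..} a * f a) \<partial>lborel)"
    by (intro nn_integral_cong) (auto simp: indicator_def f0)
  finally show ?thesis by (simp add: mult_2)
qed

lemma Lf_meas[measurable]: "Lf x \<in> borel_measurable borel"
  unfolding Lf_def by measurable

lemma Lf_abs: "Lf x \<bar>a\<bar> = Lf x a" unfolding Lf_def by simp

lemma psi_nonneg: "0 \<le> a \<Longrightarrow> a \<le> x \<Longrightarrow> 0 \<le> psi c x a"
proof -
  assume a: "0 \<le> a" "a \<le> x"
  have "a^2 \<le> x^2" using a by (intro power_mono) auto
  thus ?thesis unfolding psi_def using a by auto
qed

lemma one_dim:
  fixes r x :: real assumes r: "0 < r" and x: "0 < x"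
  shows "(\<integral>\<^sup>+a. ennreal ((max 0 (3*r/2 - \<bar>a\<bar>))^2/sqrt 3 * (2 * Lf x a)) \<partial>lborel) = ennreal (4/sqrt 3 * Jc (3*r/2) x)"
proof -
  let ?c = "3*r/2"
  let ?f = "\<lambda>a. (max 0 (?c - a))^2/sqrt 3 * (2 * Lf x a)"
  have [measurable]: "?f \<in> borel_measurable borel" by measurable
  have f0: "?f 0 = 0" using x by (simp add: Lf_def)
  have "(\<integral>\<^sup>+a. ennreal ((max 0 (?c - \<bar>a\<bar>))^2/sqrt 3 * (2 * Lf x a)) \<partial>lborel) = (\<integral>\<^sup>+a. ennreal (?f \<bar>a\<bar>) \<partial>lborel)"
    by (simp add: Lf_abs)
  also have "\<dots> = 2 * (\<integral>\<^sup>+a. ennreal (indicator {0..} a * ?f a) \<partial>lborel)"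
    by (rule even_int) (use x in \<open>simp_all add: Lf_def\<close>)
  also have "(\<integral>\<^sup>+a. ennreal (indicator {0..} a * ?f a) \<partial>lborel) = (\<integral>\<^sup>+a. ennreal (indicator {0..min ?c x} a * (2/sqrt 3 * psi ?c x a)) \<partial>lborel)"
  proof (rule nn_integral_cong)
    fix a :: real
    show "ennreal (indicator {0..} a * ?f a) = ennreal (indicator {0..min ?c x} a * (2/sqrt 3 * psi ?c x a))"
    proof (cases "0 \<le> a \<and> a \<le> min ?c x")
      case True
      then show ?thesis unfolding psi_def Lf_def by (simp add: indicator_def)
    next
      case False
      then show ?thesis
      proof (cases "0 \<le> a")
        case True
        then have "?c < a \<or> x < a" using False by auto
        then have "?f a = 0" unfolding Lf_def using True by auto
        then have e: "indicator {0..} a * ?f a = 0" by simp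
        have ind0: "indicator {0..min ?c x} a = (0::real)" using False by (simp add: indicator_def)
        show ?thesis by (simp only: e ind0 mult_zero_left)
      qed (simp add: indicator_def)
    qed
  qed
  also have "\<dots> = ennreal (2/sqrt 3 * Jc ?c x)"
  proof (rule nn_integral_has_integral_lebesgue)
    show "((\<lambda>a. 2/sqrt 3 * psi ?c x a) has_integral 2/sqrt 3 * Jc ?c x) {0..min ?c x}"
      using J_int[of ?c x] r x by (intro has_integral_mult_right) auto
    fix a assume "a \<in> {0..min ?c x}"
    then show "0 \<le> 2/sqrt 3 * psi ?c x a" using psi_nonneg[of a x ?c] by auto
  qed
  also have "2 * ennreal (2/sqrt 3 * Jc ?c x) = ennreal (4/sqrt 3 * Jc ?c x)"
  proof -
    have "ennreal (4/sqrt 3 * Jc ?c x) = ennreal (2 * (2/sqrt 3 * Jc ?c x))" by simp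
    also have "\<dots> = ennreal 2 * ennreal (2/sqrt 3 * Jc ?c x)" by (rule ennreal_mult') simp
    finally show ?thesis by simp
  qed
  finally show ?thesis .
qed


lemma tri3_sets[measurable]: "0 < r \<Longrightarrow> tri3 r \<in> sets lborel"
  using tri3_eq[of r] tri_sets by simp

lemma tri3_area: "0 < r \<Longrightarrow> emeasure lborel (tri3 r) = ennreal ((3*r/2)^2/sqrt 3)"
  using tri3_eq[of r] emeasure_tri[of "r/2" "r/2" "r/2"] by simp

lemma Gc_Jc: assumes r: "0<r" and x: "0 < x"
  shows "Gc r x = 12*sqrt 3 * Jc (3*r/2) x / (3*r/2)^4"
proof -
  have e: "2*(3*r/2)/sqrt 3 = sqrt 3 * r"
    by (simp add: field_simps)
  show ?thesis unfolding Gc_def Jc_def G1_def G2_def e using x r by (auto simp: field_simps)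
qed

lemma cdf_geo: assumes r: "0 < r"
  shows "emeasure (tri3_pair_space r) {\<omega>. dist (fst \<omega>) (snd \<omega>) \<le> x} = ennreal (Gc r x)"
proof -
  define A where "A = (3*r/2)^2/sqrt 3"
  have A: "emeasure lborel (tri3 r) = ennreal A" "0 < A" using tri3_area[OF r] r by (auto simp: A_def)
  have "emeasure (tri3_pair_space r) {\<omega>. dist (fst \<omega>) (snd \<omega>) \<le> x}
     = ennreal (1/A^2) * (\<integral>\<^sup>+h. indicator {h. norm h \<le> x} h * emeasure lborel {p. p \<in> tri3 r \<and> p + h \<in> tri3 r} \<partial>lborel)"
    unfolding tri3_pair_space_def by (rule pair_unif[OF tri3_sets[OF r] A])
  also have "(\<integral>\<^sup>+h. indicator {h. norm h \<le> x} h * emeasure lborel {p. p \<in> tri3 r \<and> p + h \<in> tri3 r} \<partial>lborel)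
     = (\<integral>\<^sup>+h. indicator {h. norm h \<le> x} h * ennreal (Kf r h) \<partial>lborel)"
    by (simp add: cov[OF r])
  also have "\<dots> = 3 * (\<integral>\<^sup>+h. indicator {h. norm h \<le> x} h * ennreal (Kf r h) * indicator P1 h \<partial>lborel)"
    by (rule three_sectors)
  also have "\<dots> = 3 * (\<integral>\<^sup>+a. ennreal ((max 0 (3*r/2 - \<bar>a\<bar>))^2/sqrt 3 * (2 * Lf x a)) \<partial>lborel)"
    by (simp add: P1_int)
  finally have eq: "emeasure (tri3_pair_space r) {\<omega>. dist (fst \<omega>) (snd \<omega>) \<le> x}
      = ennreal (1/A^2) * (3 * (\<integral>\<^sup>+a. ennreal ((max 0 (3*r/2 - \<bar>a\<bar>))^2/sqrt 3 * (2 * Lf x a)) \<partial>lborel))" .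
  show ?thesis
  proof (cases "0 < x")
    case True
    have "ennreal (1/A^2) * (3 * ennreal (4/sqrt 3 * Jc (3*r/2) x)) = ennreal (1/A^2 * (3 * (4/sqrt 3 * Jc (3*r/2) x)))"
    proof -
      have J0: "0 \<le> Jc (3*r/2) x"
        using has_integral_nonneg[OF J_int[of "3*r/2" x]] psi_nonneg r True by force
      define y where "y = 4/sqrt 3 * Jc (3*r/2) x"
      have y0: "0 \<le> y" using J0 by (simp add: y_def)
      have "3 * ennreal y = ennreal (3 * y)" using ennreal_mult'[of 3 y] by simp
      moreover have "ennreal (1/A^2) * ennreal (3*y) = ennreal (1/A^2 * (3*y))"
        by (rule ennreal_mult[symmetric]) (use y0 in auto)
      ultimately show ?thesis unfolding y_def[symmetric] by simp
    qed
    also have "1/A^2 * (3 * (4/sqrt 3 * Jc (3*r/2) x)) = Gc r x"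
      unfolding Gc_Jc[OF r True] A_def using r by (simp add: field_simps power2_eq_square power4_eq_xxxx)
    finally show ?thesis unfolding eq one_dim[OF r True] .
  next
    case False
    have "Lf x a = 0" for a
    proof -
      have "\<bar>a\<bar> \<le> x \<Longrightarrow> a = 0 \<and> x = 0" using False by auto
      thus ?thesis unfolding Lf_def by auto
    qed
    then show ?thesis unfolding eq using False by (simp add: Gc_def)
  qed
qed

lemma Gc_nonneg: assumes r: "0 < r" shows "0 \<le> Gc r x"
proof (cases "0 < x")
  case True
  have "0 \<le> Jc (3*r/2) x"
    using has_integral_nonneg[OF J_int[of "3*r/2" x]] psi_nonneg r True by force
  then show ?thesis unfolding Gc_Jc[OF r True] using r by simp
qed (simp add: Gc_def)

lemma Gc_mono: assumes r: "0 < r" and xy: "x \<le> y" shows "Gc r x \<le> Gc r y"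
proof -
  have "emeasure (tri3_pair_space r) {\<omega>. dist (fst \<omega>) (snd \<omega>) \<le> x} \<le> emeasure (tri3_pair_space r) {\<omega>. dist (fst \<omega>) (snd \<omega>) \<le> y}"
  proof (rule emeasure_mono)
    show "{\<omega>. dist (fst \<omega>) (snd \<omega>) \<le> x} \<subseteq> {\<omega>. dist (fst \<omega>) (snd \<omega>) \<le> y}" using xy by auto
    have "{\<omega> \<in> space (tri3_pair_space r). dist (fst \<omega>) (snd \<omega>) \<le> y} \<in> sets (tri3_pair_space r)"
      unfolding tri3_pair_space_def by measurable
    then show "{\<omega>. dist (fst \<omega>) (snd \<omega>) \<le> y} \<in> sets (tri3_pair_space r)"
      by (simp add: tri3_pair_space_def space_pair_measure)
  qed
  then have "ennreal (Gc r x) \<le> ennreal (Gc r y)" unfolding cdf_geo[OF r] .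
  then show ?thesis using Gc_nonneg[OF r] by (simp add: ennreal_le_iff)
qed

lemma deriv_mono_nonneg:
  fixes f :: "real \<Rightarrow> real"
  assumes m: "\<And>x y. x \<le> y \<Longrightarrow> f x \<le> f y" and d: "(f has_real_derivative D) (at t)"
  shows "0 \<le> D"
proof (rule ccontr)
  assume "\<not> 0 \<le> D"
  then obtain e where e: "e > 0" "\<forall>h>0. h < e \<longrightarrow> f t > f (t + h)"
    using DERIV_neg_dec_right[OF d] by force
  then have "f t > f (t + e/2)" by auto
  moreover have "f t \<le> f (t + e/2)" using m e by auto
  ultimately show False by simp
qed

lemma dens_at_c: assumes r: "0 < r" shows "0 \<le> tri3_density r (3*r/2)"
proof -
  have cr: "3*r/2 < sqrt 3 * r" using sqrt3_gt r by simp
  have one: "3*r/(2*(3*r/2)) = 1" using r by simp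
  have eq: "tri3_density r (3*r/2) = 4/(sqrt 3 * r) * (3/2*pi + 3*sqrt 3/4 - 6)"
    unfolding tri3_density_def tri3_phi_def tri3_area_def tri3_perimeter_def one
    using r cr by (simp add: field_simps power2_eq_square)
  have p: "3.14 \<le> pi" using pi_approx by simp
  have s: "1.73 \<le> sqrt 3" by (rule real_le_rsqrt) (simp add: power2_eq_square)
  have "0 \<le> 3/2*pi + 3*sqrt 3/4 - 6" using p s by simp
  then show ?thesis unfolding eq using r by simp
qed

lemma dens_nonneg: assumes r: "0 < r" shows "0 \<le> tri3_density r t"
proof -
  have mono: "\<And>x y. x \<le> y \<Longrightarrow> Gc r x \<le> Gc r y" using Gc_mono[OF r] .
  have cr: "3*r/2 < sqrt 3 * r" using sqrt3_gt r by simp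
  consider "t \<le> 0" | "0 < t" "t < 3*r/2" | "t = 3*r/2" | "3*r/2 < t" "t < sqrt 3 * r" | "sqrt 3 * r \<le> t"
    by linarith
  then show ?thesis
  proof cases
    case 1 then show ?thesis unfolding tri3_density_def by auto
  next
    case 2
    have "(Gc r has_real_derivative tri3_density r t) (at t)"
    proof (rule has_field_derivative_transform_within_open[OF G1_deriv[OF r 2]])
      show "open {0<..<3*r/2}" by simp
      show "t \<in> {0<..<3*r/2}" using 2 by simp
      fix y assume "y \<in> {0<..<3*r/2}" then show "G1 (3*r/2) y = Gc r y" by (simp add: Gc_def)
    qed
    from deriv_mono_nonneg[of "Gc r", OF mono this] show ?thesis .
  next
    case 3 then show ?thesis using dens_at_c[OF r] by (simp only: 3)
  next
    case 4
    have "(Gc r has_real_derivative tri3_density r t) (at t)"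
    proof (rule has_field_derivative_transform_within_open[OF G2_deriv[OF r 4]])
      show "open {3*r/2<..<sqrt 3 * r}" by simp
      show "t \<in> {3*r/2<..<sqrt 3 * r}" using 4 by simp
      fix y assume "y \<in> {3*r/2<..<sqrt 3 * r}" then show "G2 (3*r/2) y = Gc r y" using r by (simp add: Gc_def)
    qed
    from deriv_mono_nonneg[of "Gc r", OF mono this] show ?thesis .
  next
    case 5 then show ?thesis unfolding tri3_density_def by auto
  qed
qed

lemma dens_cdf: assumes r: "0 < r"
  shows "(\<integral>\<^sup>+t. ennreal (tri3_density r t) * indicator {..x} t \<partial>lborel) = ennreal (Gc r x)"
proof (cases "0 \<le> x")
  case True
  have "(\<integral>\<^sup>+t. ennreal (tri3_density r t) * indicator {..x} t \<partial>lborel)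
      = (\<integral>\<^sup>+t. ennreal (indicator {0..x} t * tri3_density r t) \<partial>lborel)"
    by (intro nn_integral_cong) (auto simp: indicator_def tri3_density_def)
  also have "\<dots> = ennreal (Gc r x)"
    by (rule nn_integral_has_integral_lebesgue[OF _ dens_int[OF r True]]) (rule dens_nonneg[OF r])
  finally show ?thesis .
next
  case False
  have "(\<lambda>t. ennreal (tri3_density r t) * indicator {..x} t) = (\<lambda>t. 0)"
    using False by (auto simp: indicator_def tri3_density_def fun_eq_iff)
  then show ?thesis using False by (simp add: Gc_def)
qed

lemma arcsin_clamp_meas[measurable]:
  "f \<in> borel_measurable M \<Longrightarrow> (\<lambda>x. arcsin (max (-1) (min 1 (f x)))) \<in> borel_measurable M"
proof -
  assume f: "f \<in> borel_measurable M"
  have "(\<lambda>z::real. arcsin (max (-1) (min 1 z))) \<in> borel_measurable borel"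
    by (intro borel_measurable_continuous_onI continuous_intros) auto
  from measurable_compose[OF f this] show ?thesis by simp
qed

lemma dens_meas: assumes r: "0 < r"
  shows "(\<lambda>t. ennreal (tri3_density r t)) \<in> borel_measurable lborel"
proof -
  have eq: "tri3_density r t = (if 0 \<le> t \<and> t < sqrt 3 * r then
        2*t / tri3_area r * (pi + tri3_perimeter r / tri3_area r *
        ((if t < 3*r/2 then (3 * sqrt 3 + 2*pi) * t^2 / (36 * r)
      else 3/2 * (t * sqrt (1 - (3*r/(2*t))^2) - pi*r/2)
           + (1/(4 * sqrt 3) - pi/9) * t^2 / r
           + (3*r/2 + t^2/(3*r)) * arcsin (max (-1) (min 1 (3*r/(2*t))))) - t))
      else 0)" for t
  proof (cases "t < 3*r/2")
    case False
    then have "0 < t" using r by linarith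
    then have "3*r/(2*t) \<le> 1" "0 \<le> 3*r/(2*t)" using False r by (auto simp: field_simps)
    then have "max (-1) (min 1 (3*r/(2*t))) = 3*r/(2*t)" by simp
    then show ?thesis unfolding tri3_density_def tri3_phi_def using False by simp
  qed (simp add: tri3_density_def tri3_phi_def)
  show ?thesis unfolding eq by measurable
qed

theorem mainTheorem5:
  fixes r :: real
  assumes "r > 0"
  shows "distributed (tri3_pair_space r) lborel (\<lambda>(p, q). dist p q)
           (\<lambda>t. ennreal (tri3_density r t))"
proof -
  have r: "0 < r" using assms .
  let ?M = "tri3_pair_space r"
  let ?X = "\<lambda>(p, q). dist p q :: real"
  let ?g = "\<lambda>t. ennreal (tri3_density r t)"
  have T[measurable]: "tri3 r \<in> sets borel" using tri3_sets[OF r] by simp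
  have Xm[measurable]: "?X \<in> measurable ?M lborel" unfolding tri3_pair_space_def by measurable
  have gm[measurable]: "?g \<in> borel_measurable lborel" by (rule dens_meas[OF r])
  have pM: "prob_space ?M" unfolding tri3_pair_space_def
    by (intro prob_space_pair prob_space_uniform_measure) (use r in \<open>simp_all add: tri3_area[OF r]\<close>)
  have rd1: "real_distribution (distr ?M lborel ?X)"
    unfolding real_distribution_def real_distribution_axioms_def
    using prob_space.prob_space_distr[OF pM Xm] by simp
  have tot: "emeasure (density lborel ?g) UNIV = 1"
  proof -
    have "emeasure (density lborel ?g) UNIV = (\<integral>\<^sup>+t. ?g t \<partial>lborel)"
      by (subst emeasure_density) auto
    also have "\<dots> = (\<integral>\<^sup>+t. ?g t * indicator {..sqrt 3 * r} t \<partial>lborel)"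
      by (intro nn_integral_cong) (auto simp: indicator_def tri3_density_def)
    also have "\<dots> = ennreal (Gc r (sqrt 3 * r))" by (rule dens_cdf[OF r])
    also have "Gc r (sqrt 3 * r) = 1" using r sqrt3_gt by (simp add: Gc_def not_le)
    finally show ?thesis by simp
  qed
  have rd2: "real_distribution (density lborel ?g)"
    unfolding real_distribution_def real_distribution_axioms_def
    using tot by (auto intro!: prob_spaceI)
  have "cdf (distr ?M lborel ?X) x = cdf (density lborel ?g) x" for x
  proof -
    have S: "?X -` {..x} \<inter> space ?M = {\<omega>. dist (fst \<omega>) (snd \<omega>) \<le> x}"
      by (auto simp: tri3_pair_space_def space_pair_measure)
    have "cdf (distr ?M lborel ?X) x = measure ?M {\<omega>. dist (fst \<omega>) (snd \<omega>) \<le> x}"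
      unfolding cdf_def2 by (subst measure_distr) (use Xm S in auto)
    also have "\<dots> = Gc r x" unfolding measure_def cdf_geo[OF r] using Gc_nonneg[OF r] by simp
    also have "\<dots> = measure (density lborel ?g) {..x}"
      unfolding measure_def by (subst emeasure_density) (auto simp: dens_cdf[OF r] Gc_nonneg[OF r])
    finally show ?thesis by (simp add: cdf_def2)
  qed
  then have "distr ?M lborel ?X = density lborel ?g"
    by (intro cdf_unique[OF rd1 rd2]) auto
  then show ?thesis unfolding distributed_def using gm Xm by blast
qed

end
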